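(* Let $n\ge2$, $A\in\mathbb{R}^{n\times d}$, $\mathcal{B}_d=\{\mathbf{w}\in\mathbb{R}^d:\|\mathbf{w}\|_2\le1\}$, and let $\alpha_t=1$. (MPFP.) Let $c=\sqrt{\log n}+\frac{1}{\sqrt2}$, $\alpha_{\mathbf{w}}=\frac{\sqrt{\log n}}{c}$, $\alpha_{\mathbf{p}}=\frac{1}{\sqrt{\log n}\,c}$, $\gamma_t=\frac1c$, and $R(\mathbf{w},\mathbf{p})=\alpha_{\mathbf{w}}\frac12\|\mathbf{w}\|_2^2+\alpha_{\mathbf{p}}E(\mathbf{p})$ on $\mathcal{Z}=\mathcal{B}_d\times\Delta^n$. Let $F(\mathbf{w},\mathbf{p})=[-A^{\top}\mathbf{p};A\mathbf{w}]\in\mathbb{R}^{d+n}$ and $\mathrm{Prox}^R_{\mathbf{v}}(\mathbf{z})=\arg\min_{\mathbf{u}\in\mathcal{Z}}\{\mathbf{u}^{\top}\mathbf{z}+D_R(\mathbf{u},\mathbf{v})\}$. Set $\mathbf{v}_1=[\mathbf{0};\tfrac{\mathbf{1}}{n}]$ and for $t=1,\dots,T$: $\mathbf{u}_t=\mathrm{Prox}^R_{\mathbf{v}_t}(\gamma_tF(\mathbf{v}_t))$, $\mathbf{v}_{t+1}=\mathrm{Prox}^R_{\mathbf{v}_t}(\gamma_tF(\mathbf{u}_t))$, $\mathbf{z}_t=\frac{\sum_{s=1}^t\gamma_s\mathbf{u}_s}{\sum_{s=1}^t\gamma_s}$. (Optimistic mirror descent dynamics.) $\widehat{\mathbf{w}}_0=\mathbf{0}$,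 $\widehat{\mathbf{p}}_0=\tfrac{\mathbf{1}}{n}$; for $t=1,\dots,T$: $\mathbf{w}_t=\arg\min_{\mathbf{w}\in\mathcal{B}_d}\frac{1}{\sqrt{\log n}}\langle-A^{\top}\widehat{\mathbf{p}}_{t-1},\mathbf{w}\rangle+\frac12\|\mathbf{w}-\widehat{\mathbf{w}}_{t-1}\|_2^2$, $\mathbf{p}_t=\arg\min_{\mathbf{p}\in\Delta^n}\sqrt{\log n}\langle A\widehat{\mathbf{w}}_{t-1},\mathbf{p}\rangle+D_E(\mathbf{p},\widehat{\mathbf{p}}_{t-1})$, $\widehat{\mathbf{w}}_t=\arg\min_{\mathbf{w}\in\mathcal{B}_d}\frac{1}{\sqrt{\log n}}\langle-A^{\top}\mathbf{p}_t,\mathbf{w}\rangle+\frac12\|\mathbf{w}-\widehat{\mathbf{w}}_{t-1}\|_2^2$, $\widehat{\mathbf{p}}_t=\arg\min_{\mathbf{p}\in\Delta^n}\sqrt{\log n}\langle A\mathbf{w}_t,\mathbf{p}\rangle+D_E(\mathbf{p},\widehat{\mathbf{p}}_{t-1})$. Then for every $t\in[T]$: $\mathbf{u}_t=[\mathbf{w}_t;\mathbf{p}_t]$, $\mathbf{v}_{t+1}=[\widehat{\mathbf{w}}_t;\widehat{\mathbf{p}}_t]$, and $\mathbf{z}_t=\big[\frac1t\sum_{s=1}^t\mathbf{w}_s;\frac1t\sum_{s=1}^t\mathbf{p}_s\big]$.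
   Context: $\Delta^n$ is the probability simplex; $\mathbf{1}$ the all-ones vector; $[\mathbf{x};\mathbf{y}]$ denotes concatenation. $E(\mathbf{p})=\sum_ip_i\log p_i$ is the negative entropy, $D_E(\mathbf{p},\mathbf{q})=\sum_ip_i\log(p_i/q_i)$ its Bregman divergence, and $D_R(\mathbf{u},\mathbf{v})=R(\mathbf{u})-R(\mathbf{v})-(\mathbf{u}-\mathbf{v})^{\top}\nabla R(\mathbf{v})$. MPFP is the mirror-prox feasibility algorithm of Yu, Kılınç-Karzan and Carbonell specialized to the bilinear objective $\mathbf{p}^{\top}A\mathbf{w}$. *)

theory Defs
  imports "HOL-Analysis.Analysis"
begin

definition prob_simplex :: "(real^'n::finite) set" where
  "prob_simplex = {p. (\<forall>i. 0 \<le> p $ i) \<and> (\<Sum>i\<in>UNIV. p $ i) = 1}"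

text \<open>Negative entropy E(p) = sum_i p_i log p_i (with Isabelle's ln 0 = 0, so 0 log 0 = 0).\<close>
definition negent :: "real^'n::finite \<Rightarrow> real" where
  "negent p = (\<Sum>i\<in>UNIV. p $ i * ln (p $ i))"

definition bregE :: "real^'n::finite \<Rightarrow> real^'n \<Rightarrow> real" where
  "bregE p q = (\<Sum>i\<in>UNIV. p $ i * ln (p $ i / q $ i))"

definition Rreg :: "real \<Rightarrow> real \<Rightarrow> (real^'d::finite) \<times> (real^'n::finite) \<Rightarrow> real" where
  "Rreg aw ap z = aw * (1/2) * (norm (fst z))^2 + ap * negent (snd z)"

definition gradR :: "real \<Rightarrow> real \<Rightarrow> (real^'d::finite) \<times> (real^'n::finite) \<Rightarrow> (real^'d) \<times> (real^'n)" where
  "gradR aw ap z = (aw *\<^sub>R fst z, ap *\<^sub>R (\<chi> i. ln (snd z $ i) + 1))"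

definition DR :: "real \<Rightarrow> real \<Rightarrow> (real^'d::finite) \<times> (real^'n::finite) \<Rightarrow> (real^'d) \<times> (real^'n) \<Rightarrow> real" where
  "DR aw ap u v = Rreg aw ap u - Rreg aw ap v - inner (u - v) (gradR aw ap v)"

definition Zset :: "((real^'d::finite) \<times> (real^'n::finite)) set" where
  "Zset = cball 0 1 \<times> prob_simplex"

definition Fop :: "real^'d::finite^'n::finite \<Rightarrow> (real^'d) \<times> (real^'n) \<Rightarrow> (real^'d) \<times> (real^'n)" where
  "Fop A z = (- (transpose A *v snd z), A *v fst z)"

definition is_prox :: "real \<Rightarrow> real \<Rightarrow> (real^'d::finite) \<times> (real^'n::finite) \<Rightarrow> (real^'d) \<times> (real^'n)
    \<Rightarrow> (real^'d) \<times> (real^'n) \<Rightarrow> bool" where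
  "is_prox aw ap v z x = is_arg_min (\<lambda>u. inner u z + DR aw ap u v) (\<lambda>u. u \<in> Zset) x"

end

theory Submission
  imports Defs
begin


lemma term_ge: fixes q r :: real assumes "r > 0" "q \<ge> 0"
  shows "q * ln (q / r) \<ge> q - r"
proof (cases "q = 0")
  case True then show ?thesis using assms by simp
next
  case False
  then have qp: "q > 0" using assms by simp
  have "ln (r/q) \<le> r/q - 1" using ln_le_minus_one[of "r/q"] qp assms by simp
  moreover have "ln (q/r) = - ln (r/q)" using qp assms by (simp add: ln_div)
  ultimately have "ln (q/r) \<ge> 1 - r/q" by simp
  then have "q * ln (q/r) \<ge> q * (1 - r/q)" using qp by (simp add: mult_left_mono)
  moreover have "q * (1 - r/q) = q - r" using qp by (simp add: field_simps)
  ultimately show ?thesis by linarith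
qed

lemma term_eq: fixes q r :: real assumes "r > 0" "q \<ge> 0" "q * ln (q / r) = q - r"
  shows "q = r"
proof -
  have qp: "q > 0" using assms by (cases "q = 0") auto
  have "ln (q/r) = 1 - r/q" using assms(3) qp by (simp add: field_simps)
  moreover have "ln (q/r) = - ln (r/q)" using qp assms by (simp add: ln_div)
  ultimately have "ln (r/q) = r/q - 1" by simp
  then have "r/q = 1" using ln_eq_minus_one[of "r/q"] qp assms by simp
  then show ?thesis using qp by simp
qed

lemma argmin_scale:
  fixes f h :: "'a \<Rightarrow> real"
  assumes "is_arg_min f P a" "\<And>x. P x \<Longrightarrow> f x = k * h x + C" "k > 0"
  shows "is_arg_min h P a"
  unfolding is_arg_min_def
proof (intro conjI notI)
  show "P a" using assms(1) unfolding is_arg_min_def by auto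
  assume "\<exists>y. P y \<and> h y < h a"
  then obtain y where y: "P y" "h y < h a" by auto
  have "k * h y < k * h a" using y(2) assms(3) by simp
  then have "f y < f a" using y assms(2)[of y] assms(2)[of a] \<open>P a\<close> by simp
  then show False using y assms(1) unfolding is_arg_min_def by auto
qed

lemma argmin_split:
  fixes F :: "'a \<times> 'b \<Rightarrow> real" and f :: "'a \<Rightarrow> real" and g :: "'b \<Rightarrow> real"
  assumes "is_arg_min F (\<lambda>u. u \<in> S \<times> U) (a, b)"
    and "\<And>x q. x \<in> S \<Longrightarrow> q \<in> U \<Longrightarrow> F (x, q) = f x + g q"
  shows "is_arg_min f (\<lambda>x. x \<in> S) a \<and> is_arg_min g (\<lambda>x. x \<in> U) b"
proof -
  have ab: "a \<in> S" "b \<in> U" using assms(1) unfolding is_arg_min_def by auto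
  have m: "F (a, b) \<le> F (x, q)" if "x \<in> S" "q \<in> U" for x q
  proof -
    have "(x, q) \<in> S \<times> U" using that by simp
    then have "\<not> F (x, q) < F (a, b)" using assms(1) unfolding is_arg_min_def by blast
    then show ?thesis by simp
  qed
  show ?thesis unfolding is_arg_min_def
  proof (intro conjI notI)
    show "a \<in> S" "b \<in> U" using ab by auto
  next
    assume "\<exists>y. y \<in> S \<and> f y < f a"
    then obtain y where y: "y \<in> S" "f y < f a" by blast
    have "F (a, b) \<le> F (y, b)" using m y ab by simp
    then show False using assms(2)[OF y(1) ab(2)] assms(2)[OF ab] y(2) by simp
  next
    assume "\<exists>y. y \<in> U \<and> g y < g b"
    then obtain y where y: "y \<in> U" "g y < g b" by blast
    have "F (a, b) \<le> F (a, y)" using m y ab by simp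
    then show False using assms(2)[OF ab(1) y(1)] assms(2)[OF ab] y(2) by simp
  qed
qed

lemma quad_unique:
  fixes g vw :: "'a::real_inner"
  assumes "is_arg_min (\<lambda>x. inner g x + 1/2 * (norm (x - vw))^2) (\<lambda>x. x \<in> S) a"
    and "is_arg_min (\<lambda>x. inner g x + 1/2 * (norm (x - vw))^2) (\<lambda>x. x \<in> S) b"
    and "convex S"
  shows "a = b"
proof -
  let ?h = "\<lambda>x. inner g x + 1/2 * (norm (x - vw))^2"
  have ab: "a \<in> S" "b \<in> S" using assms unfolding is_arg_min_def by auto
  define m where "m = (1/2) *\<^sub>R a + (1/2) *\<^sub>R b"
  have "m \<in> S" using convexD[OF assms(3) ab, of "1/2" "1/2"] unfolding m_def by simp
  then have "?h m \<ge> ?h a" "?h m \<ge> ?h b" using assms(1,2) unfolding is_arg_min_def by (auto simp: not_less)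
  moreover have "?h m = (?h a + ?h b)/2 - (norm (a - b))^2 / 8"
  proof -
    have e1: "m - vw = (1/2) *\<^sub>R (a - vw) + (1/2) *\<^sub>R (b - vw)" 
    proof -
      have "(1/2) *\<^sub>R vw + (1/2) *\<^sub>R vw = ((1/2 + 1/2)::real) *\<^sub>R vw" by (simp only: scaleR_add_left)
      then have h: "(1/2) *\<^sub>R vw + (1/2) *\<^sub>R vw = vw" by simp
      show ?thesis unfolding m_def scaleR_diff_right using h by (simp add: algebra_simps)
    qed
    have e2: "a - b = (a - vw) - (b - vw)" by simp
    have e3: "inner g m = (inner g a + inner g b)/2" unfolding m_def by (simp add: inner_add_right)
    show ?thesis unfolding e3 e1 e2 power2_norm_eq_inner
      apply (simp only: inner_add_left inner_add_right inner_diff_left inner_diff_right inner_scaleR_left inner_scaleR_right)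
      apply (simp add: inner_commute[of "b - vw" "a - vw"] field_simps)
      done
  qed
  ultimately have "(norm (a - b))^2 \<le> 0" by argo
  then show ?thesis by simp
qed



definition gibbs :: "real \<Rightarrow> real^'n::finite \<Rightarrow> real^'n \<Rightarrow> real^'n" where
  "gibbs eta y vp = (\<chi> i. vp $ i * exp (- eta * y $ i) / (\<Sum>j\<in>UNIV. vp $ j * exp (- eta * y $ j)))"

lemma gibbs_unique:
  fixes y vp a :: "real^'n::finite" and eta :: real
  assumes pos: "\<forall>i. vp $ i > 0"
    and am: "is_arg_min (\<lambda>q. eta * inner y q + bregE q vp) (\<lambda>q. q \<in> prob_simplex) a"
  shows "a = gibbs eta y vp \<and> gibbs eta y vp \<in> prob_simplex \<and> (\<forall>i. gibbs eta y vp $ i > 0)"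
proof -
  define Z where "Z = (\<Sum>j\<in>UNIV. vp $ j * exp (- eta * y $ j))"
  define r where "r = gibbs eta y vp"
  have Zp: "Z > 0" unfolding Z_def
    by (rule sum_pos) (auto simp: pos)
  have ri: "r $ i = vp $ i * exp (- eta * y $ i) / Z" for i unfolding r_def gibbs_def Z_def by simp
  have rp: "r $ i > 0" for i unfolding ri using Zp pos by simp
  have rs: "(\<Sum>i\<in>UNIV. r $ i) = 1" unfolding ri using Zp
    by (simp add: sum_divide_distrib[symmetric] Z_def)
  have rS: "r \<in> prob_simplex" unfolding prob_simplex_def using rp rs by (auto simp: less_imp_le)
  have lnr: "ln (r $ i) = ln (vp $ i) - eta * y $ i - ln Z" for i
    unfolding ri using Zp pos[rule_format, of i] by (simp add: ln_div ln_mult)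
  have key: "eta * inner y q + bregE q vp = bregE q r - ln Z" if qS: "q \<in> prob_simplex" for q
  proof -
    have q0: "q $ i \<ge> 0" for i using qS unfolding prob_simplex_def by auto
    have q1: "(\<Sum>i\<in>UNIV. q $ i) = 1" using qS unfolding prob_simplex_def by auto
    have t: "eta * (y $ i * q $ i) + q $ i * ln (q $ i / vp $ i) = q $ i * ln (q $ i / r $ i) - q $ i * ln Z" for i
    proof (cases "q $ i = 0")
      case True then show ?thesis by simp
    next
      case False
      then have "q $ i > 0" using q0[of i] by simp
      then have qp: "q $ i > 0" .
      have v: "vp $ i > 0" using pos by simp
      have e1: "q $ i * ln (q $ i / vp $ i) = q $ i * ln (q $ i) - q $ i * ln (vp $ i)"
        using qp v by (simp add: ln_div right_diff_distrib)
      have e2: "q $ i * ln (q $ i / r $ i) = q $ i * ln (q $ i) - q $ i * ln (r $ i)"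
        using qp rp[of i] by (simp add: ln_div right_diff_distrib)
      show ?thesis unfolding e1 e2 lnr by (simp add: algebra_simps)
    qed
    have "eta * inner y q + bregE q vp = (\<Sum>i\<in>UNIV. eta * (y $ i * q $ i) + q $ i * ln (q $ i / vp $ i))"
      unfolding inner_vec_def bregE_def by (simp add: sum.distrib sum_distrib_left)
    also have "\<dots> = (\<Sum>i\<in>UNIV. q $ i * ln (q $ i / r $ i) - q $ i * ln Z)" using t by simp
    also have "\<dots> = bregE q r - ln Z" unfolding bregE_def sum_subtractf
      by (simp add: sum_distrib_right[symmetric] q1)
    finally show ?thesis .
  qed
  have aS: "a \<in> prob_simplex" using am unfolding is_arg_min_def by auto
  have a0: "a $ i \<ge> 0" for i using aS unfolding prob_simplex_def by auto
  have a1: "(\<Sum>i\<in>UNIV. a $ i) = 1" using aS unfolding prob_simplex_def by auto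
  have "\<not> (eta * inner y r + bregE r vp < eta * inner y a + bregE a vp)"
    using am rS unfolding is_arg_min_def by auto
  then have "bregE a r \<le> bregE r r" using key[OF rS] key[OF aS] by simp
  also have "bregE r r = 0" unfolding bregE_def using rp by (simp add: less_imp_neq[symmetric])
  finally have le: "bregE a r \<le> 0" .
  have "(\<Sum>i\<in>UNIV. a $ i * ln (a $ i / r $ i) - (a $ i - r $ i)) = bregE a r"
    unfolding bregE_def sum_subtractf using a1 rs by simp
  then have s0: "(\<Sum>i\<in>UNIV. a $ i * ln (a $ i / r $ i) - (a $ i - r $ i)) = 0"
    using le sum_nonneg[of UNIV "\<lambda>i. a $ i * ln (a $ i / r $ i) - (a $ i - r $ i)"]
      term_ge[OF rp a0] by force
  have "a $ i * ln (a $ i / r $ i) - (a $ i - r $ i) = 0" for i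
    using iffD1[OF sum_nonneg_eq_0_iff s0] term_ge[OF rp a0] by auto
  then have "a $ i = r $ i" for i using term_eq[OF rp a0] by simp
  then have "a = r" by (simp add: vec_eq_iff)
  then show ?thesis using rS rp r_def by simp
qed



lemma breg_part:
  fixes q vp :: "real^'n::finite"
  assumes qS: "q \<in> prob_simplex" and vS: "vp \<in> prob_simplex" and pos: "\<forall>i. vp $ i > 0"
  shows "negent q - negent vp - inner (q - vp) (\<chi> i. ln (vp $ i) + 1) = bregE q vp"
proof -
  have q0: "q $ i \<ge> 0" for i using qS unfolding prob_simplex_def by auto
  have q1: "(\<Sum>i\<in>UNIV. q $ i) = 1" using qS unfolding prob_simplex_def by auto
  have v1: "(\<Sum>i\<in>UNIV. vp $ i) = 1" using vS unfolding prob_simplex_def by auto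
  have t: "q $ i * ln (q $ i) - vp $ i * ln (vp $ i) - (q $ i - vp $ i) * (ln (vp $ i) + 1)
      = q $ i * ln (q $ i / vp $ i) + (vp $ i - q $ i)" for i
  proof (cases "q $ i = 0")
    case True then show ?thesis by (simp add: algebra_simps)
  next
    case False
    then have "q $ i > 0" using q0[of i] by simp
    moreover have "vp $ i > 0" using pos by simp
    ultimately show ?thesis by (simp add: ln_div algebra_simps)
  qed
  have "negent q - negent vp - inner (q - vp) (\<chi> i. ln (vp $ i) + 1)
      = (\<Sum>i\<in>UNIV. q $ i * ln (q $ i) - vp $ i * ln (vp $ i) - (q $ i - vp $ i) * (ln (vp $ i) + 1))"
    unfolding negent_def inner_vec_def by (simp add: sum_subtractf)
  also have "\<dots> = (\<Sum>i\<in>UNIV. q $ i * ln (q $ i / vp $ i) + (vp $ i - q $ i))" using t by simp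
  also have "\<dots> = bregE q vp" unfolding bregE_def sum.distrib sum_subtractf q1 v1 by simp
  finally show ?thesis .
qed

lemma quad_part:
  fixes x vw :: "'a::real_inner"
  shows "aw * (1/2) * (norm x)^2 - aw * (1/2) * (norm vw)^2 - inner (x - vw) (aw *\<^sub>R vw)
     = aw * (1/2 * (norm (x - vw))^2)"
  unfolding power2_norm_eq_inner
  by (simp add: inner_diff_left inner_diff_right inner_commute algebra_simps)

lemma prox_decomp:
  fixes x vw zw :: "real^'d::finite" and q vp zp :: "real^'n::finite"
  assumes qS: "q \<in> prob_simplex" and vS: "vp \<in> prob_simplex" and pos: "\<forall>i. vp $ i > 0"
  shows "inner (x, q) (zw, zp) + DR aw ap (x, q) (vw, vp)
     = (inner x zw + aw * (1/2 * (norm (x - vw))^2)) + (inner q zp + ap * bregE q vp)"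
proof -
  have "DR aw ap (x, q) (vw, vp) = (aw * (1/2) * (norm x)^2 - aw * (1/2) * (norm vw)^2 - inner (x - vw) (aw *\<^sub>R vw))
     + ap * (negent q - negent vp - inner (q - vp) (\<chi> i. ln (vp $ i) + 1))"
    unfolding DR_def Rreg_def gradR_def by (simp add: algebra_simps)
  then show ?thesis using quad_part[of aw x vw] breg_part[OF qS vS pos] by simp
qed



lemma step:
  fixes vw gw a' :: "real^'d::finite" and vp gp b' :: "real^'n::finite"
    and r :: "(real^'d) \<times> (real^'n)"
  assumes vS: "vp \<in> prob_simplex" and pos: "\<forall>i. vp $ i > 0"
    and aw: "aw > 0" and ap: "ap > 0" and gw: "\<gamma> = aw * kw" and gp: "\<gamma> = ap * kp"
    and pr: "is_prox aw ap (vw, vp) (\<gamma> *\<^sub>R (gw, gp)) r"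
    and ow: "is_arg_min (\<lambda>x. kw * inner gw x + 1/2 * (norm (x - vw))^2) (\<lambda>x. x \<in> cball 0 1) a'"
    and op: "is_arg_min (\<lambda>q. kp * inner gp q + bregE q vp) (\<lambda>q. q \<in> prob_simplex) b'"
  shows "r = (a', b') \<and> b' \<in> prob_simplex \<and> (\<forall>i. b' $ i > 0)"
proof -
  obtain a b where r: "r = (a, b)" by fastforce
  have "is_arg_min (\<lambda>u. inner u (\<gamma> *\<^sub>R gw, \<gamma> *\<^sub>R gp) + DR aw ap u (vw, vp)) (\<lambda>u. u \<in> cball 0 1 \<times> prob_simplex) (a, b)"
    using pr unfolding is_prox_def Zset_def r by simp
  then have sp: "is_arg_min (\<lambda>x. inner x (\<gamma> *\<^sub>R gw) + aw * (1/2 * (norm (x - vw))^2)) (\<lambda>x. x \<in> cball 0 1) a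
     \<and> is_arg_min (\<lambda>q. inner q (\<gamma> *\<^sub>R gp) + ap * bregE q vp) (\<lambda>x. x \<in> prob_simplex) b"
    by (rule argmin_split) (use prox_decomp[OF _ vS pos] in simp)
  have a1: "is_arg_min (\<lambda>x. kw * inner gw x + 1/2 * (norm (x - vw))^2) (\<lambda>x. x \<in> cball 0 1) a"
    by (rule argmin_scale[OF conjunct1[OF sp], where k = aw and C = 0]) (simp_all add: gw aw inner_commute algebra_simps)
  have b1: "is_arg_min (\<lambda>q. kp * inner gp q + bregE q vp) (\<lambda>q. q \<in> prob_simplex) b"
    by (rule argmin_scale[OF conjunct2[OF sp], where k = ap and C = 0]) (simp_all add: gp ap inner_commute algebra_simps)
  have a2: "is_arg_min (\<lambda>x. inner (kw *\<^sub>R gw) x + 1/2 * (norm (x - vw))^2) (\<lambda>x. x \<in> cball 0 1) a"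
    by (rule argmin_scale[OF a1, where k = 1 and C = 0]) simp_all
  have a3: "is_arg_min (\<lambda>x. inner (kw *\<^sub>R gw) x + 1/2 * (norm (x - vw))^2) (\<lambda>x. x \<in> cball 0 1) a'"
    by (rule argmin_scale[OF ow, where k = 1 and C = 0]) simp_all
  have "a = a'" using quad_unique[OF a2 a3] by simp
  moreover have "b = b'" "b' \<in> prob_simplex" "\<forall>i. b' $ i > 0"
    using gibbs_unique[OF pos b1] gibbs_unique[OF pos op] by auto
  ultimately show ?thesis using r by simp
qed

theorem theorem8:
  fixes A :: "real^'d::finite^'n::finite"
    and T :: nat
    and u v :: "nat \<Rightarrow> (real^'d) \<times> (real^'n)"
    and w wh :: "nat \<Rightarrow> real^'d"
    and p ph :: "nat \<Rightarrow> real^'n"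
    and c aw ap \<gamma> :: real
  assumes n2: "CARD('n) \<ge> 2"
  defines "c \<equiv> sqrt (ln (real CARD('n))) + 1 / sqrt 2"
  defines "aw \<equiv> sqrt (ln (real CARD('n))) / c"
  defines "ap \<equiv> 1 / (sqrt (ln (real CARD('n))) * c)"
  defines "\<gamma> \<equiv> 1 / c"
  assumes v1: "v 1 = (0, \<chi> i. 1 / real CARD('n))"
    and mpfp_u: "\<forall>t\<in>{1..T}. is_prox aw ap (v t) (\<gamma> *\<^sub>R Fop A (v t)) (u t)"
    and mpfp_v: "\<forall>t\<in>{1..T}. is_prox aw ap (v t) (\<gamma> *\<^sub>R Fop A (u t)) (v (Suc t))"
    and wh0: "wh 0 = 0"
    and ph0: "ph 0 = (\<chi> i. 1 / real CARD('n))"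
    and omd_w: "\<forall>t\<in>{1..T}. is_arg_min
        (\<lambda>x. 1 / sqrt (ln (real CARD('n))) * inner (- (transpose A *v ph (t - 1))) x
              + 1/2 * (norm (x - wh (t - 1)))^2)
        (\<lambda>x. x \<in> cball 0 1) (w t)"
    and omd_p: "\<forall>t\<in>{1..T}. is_arg_min
        (\<lambda>q. sqrt (ln (real CARD('n))) * inner (A *v wh (t - 1)) q + bregE q (ph (t - 1)))
        (\<lambda>q. q \<in> prob_simplex) (p t)"
    and omd_wh: "\<forall>t\<in>{1..T}. is_arg_min
        (\<lambda>x. 1 / sqrt (ln (real CARD('n))) * inner (- (transpose A *v p t)) x
              + 1/2 * (norm (x - wh (t - 1)))^2)
        (\<lambda>x. x \<in> cball 0 1) (wh t)"
    and omd_ph: "\<forall>t\<in>{1..T}. is_arg_min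
        (\<lambda>q. sqrt (ln (real CARD('n))) * inner (A *v w t) q + bregE q (ph (t - 1)))
        (\<lambda>q. q \<in> prob_simplex) (ph t)"
  shows "\<forall>t\<in>{1..T}.
           u t = (w t, p t)
         \<and> v (Suc t) = (wh t, ph t)
         \<and> (1 / (\<Sum>s=1..t. \<gamma>)) *\<^sub>R (\<Sum>s=1..t. \<gamma> *\<^sub>R u s)
             = ((1 / real t) *\<^sub>R (\<Sum>s=1..t. w s), (1 / real t) *\<^sub>R (\<Sum>s=1..t. p s))"
proof -
  define L where "L = ln (real CARD('n))"
  define s where "s = sqrt L"
  have Lp: "L > 0" unfolding L_def using n2 by simp
  have sp: "s > 0" unfolding s_def using Lp by simp
  have cs: "c = s + 1 / sqrt 2" unfolding c_def s_def L_def ..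
  have cp: "c > 0" unfolding cs using sp by (simp add: add_pos_pos)
  have awp: "aw > 0" unfolding aw_def s_def[symmetric] L_def[symmetric] using sp cp by simp
  have app: "ap > 0" unfolding ap_def s_def[symmetric] L_def[symmetric] using sp cp by simp
  have gw: "\<gamma> = aw * (1 / sqrt (ln (real CARD('n))))"
    unfolding \<gamma>_def aw_def s_def[symmetric] L_def[symmetric] using sp cp by simp
  have gp: "\<gamma> = ap * sqrt (ln (real CARD('n)))"
    unfolding \<gamma>_def ap_def s_def[symmetric] L_def[symmetric] using sp cp by simp
  define Q where "Q t \<longleftrightarrow> v t = (wh (t - 1), ph (t - 1)) \<and> ph (t - 1) \<in> prob_simplex \<and> (\<forall>i. ph (t - 1) $ i > 0)" for t
  have U: "u t = (w t, p t) \<and> v (Suc t) = (wh t, ph t) \<and> ph t \<in> prob_simplex \<and> (\<forall>i. ph t $ i > 0)"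
    if tT: "t \<in> {1..T}" and Qt: "Q t" for t
  proof -
    have vt: "v t = (wh (t - 1), ph (t - 1))" and S: "ph (t - 1) \<in> prob_simplex" and P: "\<forall>i. ph (t - 1) $ i > 0"
      using Qt unfolding Q_def by auto
    have pr1: "is_prox aw ap (wh (t - 1), ph (t - 1)) (\<gamma> *\<^sub>R (- (transpose A *v ph (t - 1)), A *v wh (t - 1))) (u t)"
      using mpfp_u[rule_format, OF tT] unfolding vt Fop_def fst_conv snd_conv by assumption
    have ut: "u t = (w t, p t)"
      using step[OF S P awp app gw gp pr1 omd_w[rule_format, OF tT] omd_p[rule_format, OF tT]] by simp
    have pr2: "is_prox aw ap (wh (t - 1), ph (t - 1)) (\<gamma> *\<^sub>R (- (transpose A *v p t), A *v w t)) (v (Suc t))"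
      using mpfp_v[rule_format, OF tT] unfolding vt ut Fop_def fst_conv snd_conv by assumption
    show ?thesis
      using ut step[OF S P awp app gw gp pr2 omd_wh[rule_format, OF tT] omd_ph[rule_format, OF tT]] by simp
  qed
  have ph0S: "ph 0 \<in> prob_simplex" unfolding ph0 prob_simplex_def by simp
  have ph0P: "\<forall>i. ph 0 $ i > 0" unfolding ph0 by simp
  have QQ: "1 \<le> t \<Longrightarrow> t \<le> Suc T \<Longrightarrow> Q t" for t
  proof (induction t)
    case 0 then show ?case by simp
  next
    case (Suc t)
    show ?case
    proof (cases "t = 0")
      case True then show ?thesis unfolding Q_def using v1 wh0 ph0 ph0S ph0P by simp
    next
      case False
      then have tT: "t \<in> {1..T}" using Suc.prems by simp
      have "Q t" using Suc.IH Suc.prems False by simp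
      then show ?thesis using U[OF tT] unfolding Q_def by simp
    qed
  qed
  have UU: "u t = (w t, p t) \<and> v (Suc t) = (wh t, ph t)" if "t \<in> {1..T}" for t
    using U[OF that QQ] that by simp
  show ?thesis
  proof (intro ballI conjI)
    fix t assume tT: "t \<in> {1..T}"
    show "u t = (w t, p t)" "v (Suc t) = (wh t, ph t)" using UU[OF tT] by auto
    have us: "(\<Sum>s=1..t. \<gamma> *\<^sub>R u s) = \<gamma> *\<^sub>R ((\<Sum>s=1..t. w s), (\<Sum>s=1..t. p s))"
    proof -
      have "(\<Sum>s=1..t. \<gamma> *\<^sub>R u s) = (\<Sum>s=1..t. \<gamma> *\<^sub>R (w s, p s))"
        using UU tT by (intro sum.cong) auto
      also have "\<dots> = \<gamma> *\<^sub>R ((\<Sum>s=1..t. w s), (\<Sum>s=1..t. p s))"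
        by (simp add: scaleR_sum_right[symmetric] prod_eq_iff fst_sum snd_sum)
      finally show ?thesis .
    qed
    have gs: "(\<Sum>s=1..t. \<gamma>) = real t * \<gamma>" by simp
    have g0: "\<gamma> \<noteq> 0" unfolding \<gamma>_def using cp by simp
    have t0: "real t \<noteq> 0" using tT by simp
    show "(1 / (\<Sum>s=1..t. \<gamma>)) *\<^sub>R (\<Sum>s=1..t. \<gamma> *\<^sub>R u s)
             = ((1 / real t) *\<^sub>R (\<Sum>s=1..t. w s), (1 / real t) *\<^sub>R (\<Sum>s=1..t. p s))"
      unfolding us gs using g0 t0 by simp
  qed
qed

end
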